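(* Let $d\ge k\ge1$, $A\in\mathbb{R}^{d\times k}$ with $A^TA=I_k$, $\beta\in(0,1)$, $\theta^*=\sqrt{1-\beta}\,AA^T$, and let $\delta\in\mathbb{R}^{d\times d}$ and $\hat\theta:=\theta^*+\sqrt{1-\beta}\,\delta$. Let $m\in\{0,1\}^d$ and assume $\hat\lambda_{\max}:=\|(AA^T+\delta)D(m)\|<1$. Let $x_0$ be in the column space of $A$ and $x_1\in\mathbb{R}^d$ arbitrary. Define $$x_0^{(0)}=AA^Tx_1,\qquad x_0^{(r)}=\tfrac{1}{\sqrt{1-\beta}}\hat\theta\big(D(m)\,x_0^{(r-1)}+D(\mathbf 1-m)\,x_0\big)\quad(r\ge1).$$ Then for every $r\ge0$, $$\|x_0^{(r)}-x_0\|\le\hat\lambda_{\max}^r\left(\frac{\|\theta^*\|\,\|x_1-x_0\|}{\sqrt{1-\beta}}+\frac{\|\hat\theta-\theta^*\|\,\|x_0\|}{(1-\hat\lambda_{\max})\sqrt{1-\beta}}\right)+\frac{\|\hat\theta-\theta^*\|\,\|x_0\|}{(1-\hat\lambda_{\max})\sqrt{1-\beta}}.$$ *)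

theory Defs
  imports "HOL-Analysis.Analysis"
begin

definition diag_mat :: "real^'n \<Rightarrow> real^'n^'n" where
  "diag_mat v = (\<chi> i j. if i = j then v $ i else 0)"

definition opnorm :: "real^'n^'m \<Rightarrow> real" where
  "opnorm M = onorm (\<lambda>x. M *v x)"

end

theory Submission
  imports Defs
begin

lemma opnorm_bound: "norm (M *v x) \<le> opnorm M * norm x"
  unfolding opnorm_def by (rule onorm) simp

lemma opnorm_nonneg: "0 \<le> opnorm M"
  unfolding opnorm_def by (rule onorm_pos_le) simp

lemma scaleR_mat_vec: "((c::real) *\<^sub>R (M::real^'n^'m)) *v x = c *\<^sub>R (M *v x)"
  by (simp add: vec_eq_iff matrix_vector_mult_def sum_distrib_left mult.assoc real_scaleR_def)

lemma diag_vec: "diag_mat v *v x = (\<chi> i. v $ i * x $ i)"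
  proof -
  have "(if i = j then v$i else 0) * x$j = (if i = j then v$i * x$j else 0)" for i j :: 'a by simp
  then show ?thesis by (simp add: vec_eq_iff matrix_vector_mult_def diag_mat_def)
qed

theorem theorem3:
  fixes A :: "real^'k^'d" and beta :: real and delta :: "real^'d^'d"
    and m x0 x1 :: "real^'d" and xs :: "nat \<Rightarrow> real^'d"
    and thstar thhat :: "real^'d^'d" and lamhat :: real
  assumes dk: "CARD('k) \<le> CARD('d)"
    and orth: "transpose A ** A = mat 1"
    and beta: "0 < beta" "beta < 1"
    and theta_star: "thstar = sqrt (1 - beta) *\<^sub>R (A ** transpose A)"
    and theta_hat: "thhat = thstar + sqrt (1 - beta) *\<^sub>R delta"
    and m01: "\<forall>i. m $ i = 0 \<or> m $ i = 1"
    and lam: "lamhat = opnorm ((A ** transpose A + delta) ** diag_mat m)"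
    and lam1: "lamhat < 1"
    and x0col: "\<exists>y. x0 = A *v y"
    and xs0: "xs 0 = (A ** transpose A) *v x1"
    and xsSuc: "\<forall>r. xs (Suc r) = (1 / sqrt (1 - beta)) *\<^sub>R
                 (thhat *v (diag_mat m *v xs r + diag_mat (1 - m) *v x0))"
  shows "norm (xs r - x0) \<le>
           lamhat ^ r * (opnorm thstar * norm (x1 - x0) / sqrt (1 - beta)
              + opnorm (thhat - thstar) * norm x0 / ((1 - lamhat) * sqrt (1 - beta)))
           + opnorm (thhat - thstar) * norm x0 / ((1 - lamhat) * sqrt (1 - beta))"
proof -
  define s where "s = sqrt (1 - beta)"
  have s: "s > 0" using beta by (simp add: s_def)
  define P where "P = A ** transpose A"
  define D where "D = diag_mat m"
  define e where "e r = xs r - x0" for r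
  have Px0: "P *v x0 = x0"
  proof -
    obtain y where y: "x0 = A *v y" using x0col by blast
    have "P *v x0 = A *v ((transpose A ** A) *v y)"
      by (simp add: P_def y matrix_vector_mul_assoc matrix_mul_assoc)
    then show ?thesis using orth y by simp
  qed
  define c where "c = opnorm (thhat - thstar) * norm x0 / s"
  have dx: "norm (delta *v x0) \<le> c"
  proof -
    have "thhat - thstar = s *\<^sub>R delta" using theta_hat s_def by simp
    hence "(thhat - thstar) *v x0 = s *\<^sub>R (delta *v x0)" by (simp add: scaleR_mat_vec)
    hence "norm ((thhat - thstar) *v x0) = s * norm (delta *v x0)" using s by simp
    with opnorm_bound[of "thhat - thstar" x0] s show ?thesis
      unfolding c_def by (simp add: field_simps)
  qed
  have step: "e (Suc r) = ((P + delta) ** D) *v e r + delta *v x0" for r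
  proof -
    have w: "diag_mat m *v xs r + diag_mat (1 - m) *v x0 = D *v e r + x0"
      by (simp add: D_def e_def diag_vec vec_eq_iff algebra_simps)
    have th: "thhat = s *\<^sub>R (P + delta)"
      using theta_hat theta_star by (simp add: s_def P_def scaleR_right_distrib)
    have "xs (Suc r) = (P + delta) *v (D *v e r + x0)"
      using xsSuc s by (simp add: w th scaleR_mat_vec s_def)
    also have "\<dots> = ((P + delta) ** D) *v e r + x0 + delta *v x0"
      by (simp add: algebra_simps matrix_vector_mul_assoc Px0)
    finally show ?thesis by (simp add: e_def)
  qed
  have lam0: "0 \<le> lamhat" using lam opnorm_nonneg by simp
  have c0: "0 \<le> c" using s opnorm_nonneg[of "thhat - thstar"] by (simp add: c_def)
  define C where "C = c / (1 - lamhat)"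
  have C0: "0 \<le> C" using c0 lam1 by (simp add: C_def)
  have CC: "lamhat * C + c = C" using lam1 by (simp add: C_def field_simps)
  define E0 where "E0 = opnorm thstar * norm (x1 - x0) / s"
  have e0: "norm (e 0) \<le> E0"
  proof -
    have "e 0 = P *v (x1 - x0)" by (simp add: e_def xs0 P_def matrix_vector_mult_diff_distrib Px0[unfolded P_def])
    hence "s *\<^sub>R e 0 = thstar *v (x1 - x0)"
      by (simp add: theta_star s_def P_def scaleR_mat_vec)
    hence "s * norm (e 0) = norm (thstar *v (x1 - x0))" using s by (metis norm_scaleR abs_of_pos)
    with opnorm_bound[of thstar "x1 - x0"] s show ?thesis
      unfolding E0_def by (simp add: field_simps)
  qed
  have main: "norm (e r) \<le> lamhat ^ r * (E0 + C) + C" for r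
  proof (induction r)
    case 0 then show ?case using e0 C0 by simp
  next
    case (Suc r)
    have "norm (e (Suc r)) \<le> norm (((P + delta) ** D) *v e r) + norm (delta *v x0)"
      by (simp add: step norm_triangle_ineq)
    also have "\<dots> \<le> lamhat * norm (e r) + c"
      using opnorm_bound[of "(P + delta) ** D" "e r"] dx by (simp add: lam P_def D_def)
    also have "\<dots> \<le> lamhat * (lamhat ^ r * (E0 + C) + C) + c"
      using Suc lam0 by (simp add: mult_left_mono)
    also have "\<dots> = lamhat ^ Suc r * (E0 + C) + C"
      using CC by (simp add: algebra_simps)
    finally show ?case .
  qed
  have "C = opnorm (thhat - thstar) * norm x0 / ((1 - lamhat) * sqrt (1 - beta))"
    by (simp add: C_def c_def s_def)
  then show ?thesis using main[of r] by (simp add: e_def E0_def s_def)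
qed

end
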